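(* Let $N=3$ and let $(p_1,p_2,p_3)$ be a probability vector with $$4p_1^2p_2p_3-\big(p_1-p_1^2-p_2p_3\big)^2\ge0$$ (the closed region bounded by the 3-hypocycloid). Then the Weyl channel $\Phi_{\vec p}=p_1\,\mathbb{I}\otimes\mathbb{I}+p_2\,X\otimes\overline{X}+p_3\,X^2\otimes\overline{X^2}$ is unistochastic, $\Phi_{\vec p}\in\mathcal{U}_3^Q$, and the corresponding transition matrix $T(\Phi_{\vec p})=p_1\mathbb{I}_3+p_2X+p_3X^2$ is unistochastic, $T(\Phi_{\vec p})\in\mathcal{U}_3^C$.
   Context: $X$ is the $3\times3$ shift $X|j\rangle=|j\oplus1\rangle$ (addition mod 3). Channels are identified with superoperators acting on $|A\rangle\rangle=\sum A_{ij}|i\rangle|j\rangle$ ($\rho\mapsto K\rho K^\dagger$ corresponds to $K\otimes\overline K$). $\mathcal{U}_3^Q$ is the set of channels $\Psi_U(\rho)=\mathrm{Tr}_E[U(\rho\otimes\mathbb{I}_3/3)U^\dagger]$ with $U\in U(9)$ acting on $\mathbb{C}^3\otimes\mathbb{C}^3_E$; $\mathcal{U}_3^C=\{V\odot\overline{V}:V\in U(3)\}$ with $\odot$ the entrywise product. The transition matrix of a channel is $T(\Phi)_{ij}=\mathrm{Tr}[|i\rangle\langle i|\,\Phi(|j\rangle\langle j|)]$. *)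

theory Defs
  imports "HOL-Analysis.Analysis" "HOL-Library.Numeral_Type"
begin

type_synonym cmat3 = "complex ^ 3 ^ 3"
type_synonym cmat9 = "complex ^ (3 \<times> 3) ^ (3 \<times> 3)"

definition adj :: "complex ^ 'n ^ 'm \<Rightarrow> complex ^ 'm ^ 'n" where
  "adj A = (\<chi> i j. cnj (A $ j $ i))"

definition unitary_mat :: "complex ^ 'n ^ 'n \<Rightarrow> bool" where
  "unitary_mat U \<longleftrightarrow> U ** adj U = mat 1 \<and> adj U ** U = mat 1"

definition shiftX :: cmat3 where
  "shiftX = (\<chi> i j. if i = j + 1 then 1 else 0)"

definition kraus :: "cmat3 \<Rightarrow> cmat3 \<Rightarrow> cmat3" where
  "kraus K \<rho> = K ** \<rho> ** adj K"

definition weyl_channel :: "real \<Rightarrow> real \<Rightarrow> real \<Rightarrow> cmat3 \<Rightarrow> cmat3" where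
  "weyl_channel p1 p2 p3 \<rho> =
     p1 *\<^sub>R \<rho>
     + p2 *\<^sub>R kraus shiftX \<rho>
     + p3 *\<^sub>R kraus (shiftX ** shiftX) \<rho>"

definition tensor_max_mixed :: "cmat3 \<Rightarrow> cmat9" where
  "tensor_max_mixed \<rho> = (\<chi> x y. \<rho> $ fst x $ fst y * (if snd x = snd y then 1 / 3 else 0))"

definition ptrace_E :: "cmat9 \<Rightarrow> cmat3" where
  "ptrace_E M = (\<chi> i j. \<Sum>a\<in>UNIV. M $ (i, a) $ (j, a))"

definition Psi :: "cmat9 \<Rightarrow> cmat3 \<Rightarrow> cmat3" where
  "Psi U \<rho> = ptrace_E (U ** tensor_max_mixed \<rho> ** adj U)"

definition unistochastic_channel :: "(cmat3 \<Rightarrow> cmat3) \<Rightarrow> bool" where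
  "unistochastic_channel \<Phi> \<longleftrightarrow> (\<exists>U::cmat9. unitary_mat U \<and> \<Phi> = Psi U)"

definition proj :: "3 \<Rightarrow> cmat3" where
  "proj j = (\<chi> a b. if a = j \<and> b = j then 1 else 0)"

definition transition_matrix :: "(cmat3 \<Rightarrow> cmat3) \<Rightarrow> cmat3" where
  "transition_matrix \<Phi> = (\<chi> i j. trace (proj i ** \<Phi> (proj j)))"

definition unistochastic_matrix :: "cmat3 \<Rightarrow> bool" where
  "unistochastic_matrix T \<longleftrightarrow>
     (\<exists>V::cmat3. unitary_mat V \<and> T = (\<chi> i j. V $ i $ j * cnj (V $ i $ j)))"

end

theory Submission
  imports Defs
begin


lemma unit_cube_root:
  fixes w :: complex assumes "w \<noteq> 0"
  shows "(exp (Ln w / 3))^3 = w"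
proof -
  have "(exp (Ln w / 3))^3 = exp (of_nat 3 * (Ln w / 3))"
    by (metis exp_of_nat_mult)
  also have "\<dots> = exp (Ln w)" by simp
  also have "\<dots> = w" using assms by simp
  finally show ?thesis .
qed

lemma csqrt_self: "0 \<le> r \<Longrightarrow> complex_of_real (sqrt r) * complex_of_real (sqrt r) = complex_of_real r"
  by (metis of_real_mult real_sqrt_mult_self abs_of_nonneg)

lemma exist_abc:
  fixes p1 p2 p3 :: real
  assumes "p1 \<ge> 0" "p2 \<ge> 0" "p3 \<ge> 0" "p1 + p2 + p3 = 1"
    and h: "4 * p1^2 * p2 * p3 - (p1 - p1^2 - p2 * p3)^2 \<ge> 0"
  shows "\<exists>a b c :: complex. a * cnj a = p1 \<and> b * cnj b = p2 \<and> c * cnj c = p3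
           \<and> a * cnj b + b * cnj c + c * cnj a = 0"
proof -
  define x where "x = sqrt (p1*p2)"
  define y where "y = sqrt (p2*p3)"
  define z where "z = sqrt (p1*p3)"
  have x2: "x^2 = p1*p2" unfolding x_def using assms by simp
  have y2: "y^2 = p2*p3" unfolding y_def using assms by simp
  have z2: "z^2 = p1*p3" unfolding z_def using assms by simp
  have p23: "p2 + p3 = 1 - p1" using assms(4) by linarith
  have "x^2 + z^2 = p1 * (p2 + p3)" by (simp add: x2 z2 distrib_left)
  then have xz: "x^2 + z^2 = p1 - p1^2" unfolding p23 by (simp add: algebra_simps power2_eq_square)
  have y0: "y \<ge> 0" "x \<ge> 0" "z \<ge> 0" unfolding x_def y_def z_def using assms by auto
  have key: "(y^2 - x^2 - z^2)^2 \<le> 4 * x^2 * z^2"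
  proof -
    have "y^2 - x^2 - z^2 = -(p1 - p1^2 - p2*p3)" using xz y2 by linarith
    then have "(y^2 - x^2 - z^2)^2 = (-(p1 - p1^2 - p2*p3))^2" by (rule arg_cong)
    then have "(y^2 - x^2 - z^2)^2 = (p1 - p1^2 - p2*p3)^2" by (simp only: power2_minus)
    moreover have "4 * x^2 * z^2 = 4 * p1^2 * p2 * p3" using x2 z2 by (simp add: power2_eq_square)
    ultimately show ?thesis using h by linarith
  qed
  define ct where "ct = (if x*z = 0 then 0 else (y^2 - x^2 - z^2) / (2*x*z))"
  have ct1: "ct^2 \<le> 1"
  proof (cases "x*z = 0")
    case True then show ?thesis by (simp add: ct_def)
  next
    case False
    then have pos: "(2*x*z)^2 > 0" by simp
    have "ct^2 = (y^2 - x^2 - z^2)^2 / (2*x*z)^2" using False by (simp add: ct_def power_divide)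
    also have "\<dots> \<le> 1" using key pos by (simp add: power_mult_distrib)
    finally show ?thesis .
  qed
  have ctrel: "x^2 + z^2 + 2*x*z*ct = y^2"
  proof (cases "x*z = 0")
    case True
    then have "4 * x^2 * z^2 = 0" by (simp add: power_mult_distrib[symmetric])
    then have "(y^2 - x^2 - z^2)^2 = 0" using key by (smt (verit) zero_le_power2)
    then show ?thesis using True by (simp add: ct_def)
  next
    case False then show ?thesis by (simp add: ct_def field_simps)
  qed
  define st where "st = sqrt (1 - ct^2)"
  have st2: "st^2 + ct^2 = 1" unfolding st_def using ct1 by simp
  define t where "t = Complex ct st"
  have tt: "t * cnj t = 1" unfolding t_def using st2
    by (simp add: complex_eq_iff power2_eq_square)
  define k where "k = t * (of_real x + of_real z * t)"
  have kk: "k * cnj k = of_real (y^2)"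
  proof -
    have "k * cnj k = (t * cnj t) * ((of_real x + of_real z * t) * (of_real x + of_real z * cnj t))"
      by (simp add: k_def algebra_simps)
    also have "\<dots> = of_real x ^2 + of_real z^2 * (t * cnj t) + of_real x * of_real z * (t + cnj t)"
      using tt by (simp add: algebra_simps power2_eq_square)
    also have "\<dots> = of_real (x^2 + z^2 + 2*x*z*ct)"
      using tt by (simp add: t_def complex_eq_iff)
    finally show ?thesis using ctrel by simp
  qed
  define u where "u = (if k = 0 then 1 else exp (Ln (- of_real y / k) / 3))"
  have u3: "u^3 * k = - of_real y"
  proof (cases "k = 0")
    case True
    then have "y^2 = 0" using kk by (metis of_real_eq_0_iff mult_zero_left)
    then show ?thesis using True by (simp add: u_def)
  next
    case False
    then have "y \<noteq> 0" using kk by auto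
    then have "- of_real y / k \<noteq> 0" using False by simp
    then have "u^3 = - of_real y / k" using False by (simp add: u_def unit_cube_root)
    then show ?thesis using False by simp
  qed
  have nu: "norm u = 1"
  proof (cases "k = 0")
    case True then show ?thesis by (simp add: u_def)
  next
    case False
    have nk: "norm k = y" using kk y0
      by (metis complex_norm_square norm_ge_zero of_real_eq_iff power2_eq_iff_nonneg)
    have "norm (u^3 * k) = y" using u3 y0 by simp
    then have "norm u ^ 3 * y = y" by (simp add: norm_mult norm_power nk)
    moreover have "y \<noteq> 0" using nk False by auto
    ultimately have "norm u ^ 3 = 1" by simp
    then show ?thesis using power_eq_iff_eq_base[of 3 "norm u" 1] by simp
  qed
  have uu: "u * cnj u = 1" using nu complex_norm_square
    by (metis mult_1 of_real_1 power_one)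
  define a where "a = complex_of_real (sqrt p1)"
  define b where "b = complex_of_real (sqrt p2) * cnj u"
  define c where "c = complex_of_real (sqrt p3) * u * t"
  have "a * cnj a = p1"
  proof -
    show ?thesis using assms by (simp add: a_def csqrt_self)
  qed
  moreover have "b * cnj b = p2"
  proof -
    have "b * cnj b = (of_real (sqrt p2) * of_real (sqrt p2)) * (u * cnj u)" by (simp add: b_def algebra_simps)
    then show ?thesis using uu assms by (simp add: csqrt_self)
  qed
  moreover have "c * cnj c = p3"
  proof -
    have "c * cnj c = (of_real (sqrt p3) * of_real (sqrt p3)) * (u * cnj u) * (t * cnj t)" by (simp add: c_def algebra_simps)
    then show ?thesis using uu tt assms by (simp add: csqrt_self)
  qed
  moreover have "a * cnj b + b * cnj c + c * cnj a = 0"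
  proof -
    define S where "S = a * cnj b + b * cnj c + c * cnj a"
    have S: "S = of_real x * u + of_real y * cnj u ^ 2 * cnj t + of_real z * u * t"
      unfolding S_def a_def b_def c_def x_def y_def z_def
      by (simp add: real_sqrt_mult power2_eq_square algebra_simps)
    have "S * (u^2 * t) = u^3 * k + of_real y * (u * cnj u)^2 * (t * cnj t)"
      unfolding S k_def by (simp add: algebra_simps power2_eq_square power3_eq_cube)
    also have "\<dots> = 0" using u3 uu tt by simp
    finally have "S * (u^2 * t) = 0" .
    moreover have "u^2 * t \<noteq> 0" using uu tt by auto
    ultimately show ?thesis unfolding S_def by simp
  qed
  ultimately show ?thesis by blast
qed



lemma sum_pair: "(\<Sum>z\<in>(UNIV::('a::finite \<times> 'b::finite) set). g z) = (\<Sum>a\<in>UNIV. \<Sum>b\<in>UNIV. g (a,b))"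
proof -
  have "(\<Sum>a\<in>(UNIV::'a set). \<Sum>b\<in>(UNIV::'b set). g (a,b)) = (\<Sum>(a,b)\<in>UNIV \<times> UNIV. g (a,b))"
    by (rule sum.cartesian_product)
  also have "\<dots> = (\<Sum>z\<in>UNIV. g z)" by (simp only: UNIV_Times_UNIV split_def prod.collapse)
  finally show ?thesis by (rule sym)
qed

lemma sum_shift3:
  fixes X Y :: "3 \<Rightarrow> complex"
  shows "(\<Sum>l\<in>UNIV. (if i - a = l - b then X l else 0) * Y l) = X (i - a + b) * Y (i - a + b)"
proof -
  have "\<And>l. (if i - a = l - b then X l else 0) * Y l = (if l = i - a + b then X l * Y l else 0)"
    by (auto simp: algebra_simps)
  then show ?thesis by (simp add: sum.delta')
qed

lemma sum_shift3':
  fixes X Y :: "3 \<Rightarrow> complex"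
  shows "(\<Sum>l\<in>UNIV. (if l - b = i - a then X l else 0) * Y l) = X (i - a + b) * Y (i - a + b)"
proof -
  have "\<And>l. (if l - b = i - a then X l else 0) * Y l = (if l = i - a + b then X l * Y l else 0)"
    by (auto simp: algebra_simps)
  then show ?thesis by (simp add: sum.delta')
qed

lemma cnj_if: "cnj (if P then x else 0) = (if P then cnj x else 0)" by simp

definition fV :: "complex \<Rightarrow> complex \<Rightarrow> complex \<Rightarrow> 3 \<Rightarrow> complex" where
  "fV a b c k = (if k = 0 then a else if k = 1 then b else c)"

definition Vc :: "complex \<Rightarrow> complex \<Rightarrow> complex \<Rightarrow> cmat3" where
  "Vc a b c = (\<chi> i j. fV a b c (i - j))"

lemma fV_simps: "fV a b c 0 = a" "fV a b c 1 = b" "fV a b c 2 = c" "fV a b c 3 = a"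
  "fV a b c (-1) = c" "fV a b c (-2) = b"
  by (auto simp: fV_def)

lemma Vc_unitary:
  assumes n: "a * cnj a + b * cnj b + c * cnj c = 1"
    and e: "a * cnj b + b * cnj c + c * cnj a = 0"
  shows "unitary_mat (Vc a b c)"
proof -
  have e': "cnj a * b + cnj b * c + cnj c * a = 0" using arg_cong[OF e, of cnj] by (simp add: mult.commute)
  show ?thesis
    unfolding unitary_mat_def
    apply (simp add: vec_eq_iff forall_3 sum_3 matrix_matrix_mult_def adj_def mat_def Vc_def fV_simps)
    using n e e' by (simp_all add: algebra_simps)
qed

definition Pk :: "3 \<Rightarrow> cmat3" where "Pk k = (\<chi> i j. if i = j + k then 1 else 0)"

lemma shiftX_Pk: "shiftX = Pk 1" by (simp add: shiftX_def Pk_def)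

lemma Pk_mult: "Pk k ** Pk l = Pk (k + l)"
proof -
  have "\<And>i j. (\<Sum>m\<in>UNIV. (if i = m + k then 1 else 0) * (if m = j + l then 1 else 0) :: complex)
     = (if i = j + (k + l) then 1 else 0)"
  proof -
    fix i j :: 3
    have "\<And>m. ((if i = m + k then 1 else 0) * (if m = j + l then 1 else 0) :: complex)
      = (if m = j + l then (if i = j + (k + l) then 1 else 0) else 0)"
      by (auto simp: algebra_simps)
    then show "(\<Sum>m\<in>UNIV. (if i = m + k then 1 else 0) * (if m = j + l then 1 else 0) :: complex)
     = (if i = j + (k + l) then 1 else 0)" by (simp add: sum.delta')
  qed
  then show ?thesis by (simp add: Pk_def matrix_matrix_mult_def vec_eq_iff)
qed

lemma kraus_Pk: "kraus (Pk k) \<rho> $ i $ j = \<rho> $ (i - k) $ (j - k)"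
proof -
  have adj: "adj (Pk k) = (\<chi> i j. if j = i + k then 1 else 0)"
    by (simp add: adj_def Pk_def vec_eq_iff)
  have 1: "(Pk k ** \<rho>) $ i $ m = \<rho> $ (i - k) $ m" for i m
  proof -
    have "\<And>l. (if i = l + k then 1 else 0) * \<rho> $ l $ m = (if l = i - k then \<rho> $ l $ m else 0)"
      by (auto simp: algebra_simps)
    then show ?thesis by (simp add: Pk_def matrix_matrix_mult_def sum.delta')
  qed
  have "\<And>l. (Pk k ** \<rho>) $ i $ l * (if j = l + k then 1 else 0) = (if l = j - k then \<rho> $ (i - k) $ l else 0)"
    using 1 by (auto simp: algebra_simps)
  then show ?thesis by (simp add: kraus_def adj matrix_matrix_mult_def sum.delta')
qed

lemma sc: "((r::real) *\<^sub>R (M::cmat3)) $ i $ j = of_real r * M $ i $ j"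
proof -
  have "(r *\<^sub>R M) $ i $ j = r *\<^sub>R (M $ i $ j)" by simp
  also have "\<dots> = of_real r * M $ i $ j" by (rule scaleR_conv_of_real)
  finally show ?thesis .
qed

lemma ifmult: "(if P then 1 else 0) * x = (if P then x else (0::complex))" by simp

lemma weyl_entry: "weyl_channel p1 p2 p3 \<rho> $ i $ j =
   of_real p1 * \<rho> $ i $ j + of_real p2 * \<rho> $ (i - 1) $ (j - 1) + of_real p3 * \<rho> $ (i - 2) $ (j - 2)"
  unfolding weyl_channel_def shiftX_Pk Pk_mult
  by (simp add: kraus_Pk sc) (simp add: scaleR_conv_of_real)

lemma trace_proj: "trace (proj i ** M) = M $ i $ i"
proof -
  have "\<And>k. (\<Sum>l\<in>UNIV. (if k = i \<and> l = i then 1 else 0) * M $ l $ k) = (if k = i then M $ i $ i else 0)"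
    by (auto simp: ifmult sum.delta)
  then show ?thesis by (simp add: trace_def proj_def matrix_matrix_mult_def sum.delta')
qed

lemma transition:
  "transition_matrix (weyl_channel p1 p2 p3) = p1 *\<^sub>R mat 1 + p2 *\<^sub>R shiftX + p3 *\<^sub>R (shiftX ** shiftX)"
  unfolding transition_matrix_def trace_proj weyl_entry shiftX_Pk Pk_mult
  apply (simp add: vec_eq_iff proj_def Pk_def mat_def forall_3 sc)
  apply (simp add: scaleR_conv_of_real)
  done

lemma T_Vc:
  assumes "a * cnj a = p1" "b * cnj b = p2" "c * cnj c = p3"
  shows "p1 *\<^sub>R mat 1 + p2 *\<^sub>R shiftX + p3 *\<^sub>R (shiftX ** shiftX)
     = (\<chi> i j. Vc a b c $ i $ j * cnj (Vc a b c $ i $ j))"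
  unfolding shiftX_Pk Pk_mult
  apply (simp add: vec_eq_iff Pk_def mat_def forall_3 sc Vc_def fV_simps)
  using assms by (simp add: scaleR_conv_of_real)

definition U9 :: "cmat3 \<Rightarrow> cmat9" where
  "U9 V = (\<chi> x y. if fst x - snd x = fst y - snd y then V $ snd x $ snd y else 0)"

lemma U9_unitary:
  assumes "unitary_mat V"
  shows "unitary_mat (U9 V)"
proof -
  have VV: "V ** adj V = mat 1" "adj V ** V = mat 1" using assms by (auto simp: unitary_mat_def)
  have 1: "(U9 V ** adj (U9 V)) $ (i,a) $ (j,c) = (if (i,a) = (j,c) then 1 else 0)" for i a j c
  proof -
    have "(U9 V ** adj (U9 V)) $ (i,a) $ (j,c) =
      (\<Sum>l\<in>UNIV. \<Sum>b\<in>UNIV. (if i - a = l - b then V $ a $ b else 0) * cnj (if j - c = l - b then V $ c $ b else 0))"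
      by (simp add: matrix_matrix_mult_def adj_def U9_def sum_pair cong: if_cong)
    also have "\<dots> = (\<Sum>b\<in>UNIV. \<Sum>l\<in>UNIV. (if i - a = l - b then V $ a $ b else 0) * cnj (if j - c = l - b then V $ c $ b else 0))"
      by (rule sum.swap)
    also have "\<dots> = (\<Sum>b\<in>UNIV. (if j - c = i - a then V $ a $ b * cnj (V $ c $ b) else 0))"
      by (cases "j - c = i - a") (simp_all add: sum_shift3[where X = "\<lambda>l. V $ a $ _"])
    also have "\<dots> = (if j - c = i - a then (V ** adj V) $ a $ c else 0)"
      by (simp add: matrix_matrix_mult_def adj_def)
    also have "\<dots> = (if (i,a) = (j,c) then 1 else 0)"
      by (auto simp: VV mat_def)
    finally show ?thesis .
  qed
  have 2: "(adj (U9 V) ** U9 V) $ (i,a) $ (j,c) = (if (i,a) = (j,c) then 1 else 0)" for i a j c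
  proof -
    have "(adj (U9 V) ** U9 V) $ (i,a) $ (j,c) =
      (\<Sum>l\<in>UNIV. \<Sum>b\<in>UNIV. (if l - b = i - a then cnj (V $ b $ a) else 0) * (if l - b = j - c then V $ b $ c else 0))"
      by (simp add: matrix_matrix_mult_def adj_def U9_def sum_pair cnj_if cong: if_cong)
    also have "\<dots> = (\<Sum>b\<in>UNIV. \<Sum>l\<in>UNIV. (if l - b = i - a then cnj (V $ b $ a) else 0) * (if l - b = j - c then V $ b $ c else 0))"
      by (rule sum.swap)
    also have "\<dots> = (\<Sum>b\<in>UNIV. (if j - c = i - a then cnj (V $ b $ a) * V $ b $ c else 0))"
      by (cases "j - c = i - a") (simp_all add: sum_shift3'[where X = "\<lambda>l. cnj (V $ _ $ a)"])
    also have "\<dots> = (if j - c = i - a then (adj V ** V) $ a $ c else 0)"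
      by (simp add: matrix_matrix_mult_def adj_def)
    also have "\<dots> = (if (i,a) = (j,c) then 1 else 0)"
      by (auto simp: VV mat_def)
    finally show ?thesis .
  qed
  show ?thesis unfolding unitary_mat_def
    using 1 2 by (simp add: vec_eq_iff mat_def)
qed

lemma UM_entry: "(U9 V ** tensor_max_mixed \<rho>) $ (i,e) $ (y,g) = V $ e $ g * \<rho> $ (i - e + g) $ y / 3"
proof -
  have "(U9 V ** tensor_max_mixed \<rho>) $ (i,e) $ (y,g) =
     (\<Sum>x\<in>UNIV. \<Sum>f\<in>UNIV. (if i - e = x - f then V $ e $ f else 0) * (\<rho> $ x $ y * (if f = g then 1 / 3 else 0)))"
    by (simp add: matrix_matrix_mult_def U9_def tensor_max_mixed_def sum_pair cong: if_cong)
  also have "\<dots> = (\<Sum>x\<in>UNIV. (if i - e = x - g then V $ e $ g else 0) * \<rho> $ x $ y / 3)"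
    by (simp add: if_distrib[of "\<lambda>z. _ * z"] sum.delta' cong: if_cong)
  also have "\<dots> = V $ e $ g * \<rho> $ (i - e + g) $ y / 3"
    using sum_shift3[of i e g "\<lambda>x. V $ e $ g" "\<lambda>x. \<rho> $ x $ y / 3"] by simp
  finally show ?thesis .
qed

lemma Psi_entry: "Psi (U9 V) \<rho> $ i $ j =
   (\<Sum>e\<in>UNIV. \<Sum>g\<in>UNIV. V $ e $ g * cnj (V $ e $ g) * \<rho> $ (i - e + g) $ (j - e + g)) / 3"
proof -
  have "\<And>e. (U9 V ** tensor_max_mixed \<rho> ** adj (U9 V)) $ (i,e) $ (j,e) =
     (\<Sum>g\<in>UNIV. V $ e $ g * cnj (V $ e $ g) * \<rho> $ (i - e + g) $ (j - e + g) / 3)"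
  proof -
    fix e
    have "(U9 V ** tensor_max_mixed \<rho> ** adj (U9 V)) $ (i,e) $ (j,e) =
      (\<Sum>y\<in>UNIV. \<Sum>g\<in>UNIV. (V $ e $ g * \<rho> $ (i - e + g) $ y / 3) * (if j - e = y - g then cnj (V $ e $ g) else 0))"
    proof -
      have "(U9 V ** tensor_max_mixed \<rho> ** adj (U9 V)) $ (i,e) $ (j,e) =
        (\<Sum>z\<in>UNIV. (U9 V ** tensor_max_mixed \<rho>) $ (i,e) $ z * adj (U9 V) $ z $ (j,e))"
        unfolding matrix_matrix_mult_def[of "U9 V ** tensor_max_mixed \<rho>"] by simp
      also have "\<dots> = (\<Sum>y\<in>UNIV. \<Sum>g\<in>UNIV. (U9 V ** tensor_max_mixed \<rho>) $ (i,e) $ (y,g) * adj (U9 V) $ (y,g) $ (j,e))"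
        by (simp only: sum_pair)
      also have "\<dots> = (\<Sum>y\<in>UNIV. \<Sum>g\<in>UNIV. (V $ e $ g * \<rho> $ (i - e + g) $ y / 3) * adj (U9 V) $ (y,g) $ (j,e))"
        by (simp only: UM_entry)
      also have "\<dots> = (\<Sum>y\<in>UNIV. \<Sum>g\<in>UNIV. (V $ e $ g * \<rho> $ (i - e + g) $ y / 3) * (if j - e = y - g then cnj (V $ e $ g) else 0))"
        by (simp add: adj_def U9_def cnj_if cong: if_cong)
      finally show ?thesis .
    qed
    also have "\<dots> = (\<Sum>g\<in>UNIV. \<Sum>y\<in>UNIV. (V $ e $ g * \<rho> $ (i - e + g) $ y / 3) * (if j - e = y - g then cnj (V $ e $ g) else 0))"
      by (rule sum.swap)
    also have "\<dots> = (\<Sum>g\<in>UNIV. V $ e $ g * cnj (V $ e $ g) * \<rho> $ (i - e + g) $ (j - e + g) / 3)"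
    proof (rule sum.cong[OF refl])
      fix g
      have "\<And>y. (V $ e $ g * \<rho> $ (i - e + g) $ y / 3) * (if j - e = y - g then cnj (V $ e $ g) else 0)
         = (if y = j - e + g then V $ e $ g * cnj (V $ e $ g) * \<rho> $ (i - e + g) $ y / 3 else 0)"
        by (auto simp: algebra_simps)
      then show "(\<Sum>y\<in>UNIV. (V $ e $ g * \<rho> $ (i - e + g) $ y / 3) * (if j - e = y - g then cnj (V $ e $ g) else 0))
          = V $ e $ g * cnj (V $ e $ g) * \<rho> $ (i - e + g) $ (j - e + g) / 3"
        by (simp add: sum.delta')
    qed
    finally show "(U9 V ** tensor_max_mixed \<rho> ** adj (U9 V)) $ (i,e) $ (j,e) =
     (\<Sum>g\<in>UNIV. V $ e $ g * cnj (V $ e $ g) * \<rho> $ (i - e + g) $ (j - e + g) / 3)" .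
  qed
  then show ?thesis
    by (simp add: Psi_def ptrace_E_def sum_divide_distrib)
qed

lemma idx3: "(-1::3) = 2" "(-2::3) = 1" "(3::3) = 0" "(4::3) = 1" "(5::3) = 2" "(6::3) = 0"
  by simp_all

lemma reidx3: "(\<Sum>g\<in>(UNIV::3 set). h (e - g)) = (\<Sum>k\<in>UNIV. (h k :: complex))"
  by (rule sum.reindex_bij_witness[of _ "\<lambda>k. e - k" "\<lambda>k. e - k"]) auto

lemma Psi_weyl:
  assumes "a * cnj a = p1" "b * cnj b = p2" "c * cnj c = p3"
  shows "Psi (U9 (Vc a b c)) = weyl_channel p1 p2 p3"
proof (rule ext)
  fix \<rho>
  define h where "h i j k = fV a b c k * cnj (fV a b c k) * \<rho> $ (i - k) $ (j - k)" for i j k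
  have "Psi (U9 (Vc a b c)) \<rho> $ i $ j = weyl_channel p1 p2 p3 \<rho> $ i $ j" for i j
  proof -
    have "Psi (U9 (Vc a b c)) \<rho> $ i $ j = (\<Sum>e\<in>UNIV. \<Sum>g\<in>UNIV. h i j (e - g)) / 3"
      unfolding Psi_entry h_def Vc_def by (simp add: algebra_simps)
    also have "\<dots> = (\<Sum>e\<in>(UNIV::3 set). \<Sum>k\<in>UNIV. h i j k) / 3"
      by (simp only: reidx3)
    also have "\<dots> = (\<Sum>k\<in>UNIV. h i j k)" by simp
    also have "\<dots> = weyl_channel p1 p2 p3 \<rho> $ i $ j"
      unfolding weyl_entry sum_3 h_def by (simp add: fV_simps idx3 assms algebra_simps)
    finally show ?thesis .
  qed
  then show "Psi (U9 (Vc a b c)) \<rho> = weyl_channel p1 p2 p3 \<rho>" by (simp add: vec_eq_iff)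
qed

theorem proposition10:
  fixes p1 p2 p3 :: real
  assumes "p1 \<ge> 0" "p2 \<ge> 0" "p3 \<ge> 0" "p1 + p2 + p3 = 1"
    and "4 * p1^2 * p2 * p3 - (p1 - p1^2 - p2 * p3)^2 \<ge> 0"
  shows "unistochastic_channel (weyl_channel p1 p2 p3)
    \<and> transition_matrix (weyl_channel p1 p2 p3)
        = p1 *\<^sub>R mat 1 + p2 *\<^sub>R shiftX
          + p3 *\<^sub>R (shiftX ** shiftX)
    \<and> unistochastic_matrix (transition_matrix (weyl_channel p1 p2 p3))"
proof -
  obtain a b c :: complex where h: "a * cnj a = p1" "b * cnj b = p2" "c * cnj c = p3"
    and e: "a * cnj b + b * cnj c + c * cnj a = 0"
    using exist_abc[OF assms] by (elim exE conjE) (rule that)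
  have n: "a * cnj a + b * cnj b + c * cnj c = 1"
  proof -
    have "a * cnj a + b * cnj b + c * cnj c = of_real (p1 + p2 + p3)" using h by simp
    then show ?thesis using assms(4) by simp
  qed
  have V: "unitary_mat (Vc a b c)" using Vc_unitary[OF n e] .
  have 1: "unistochastic_channel (weyl_channel p1 p2 p3)"
    unfolding unistochastic_channel_def
    by (rule exI[of _ "U9 (Vc a b c)"]) (simp add: U9_unitary[OF V] Psi_weyl[OF h])
  have 3: "unistochastic_matrix (transition_matrix (weyl_channel p1 p2 p3))"
    unfolding unistochastic_matrix_def transition T_Vc[OF h]
    by (rule exI[of _ "Vc a b c"]) (simp add: V)
  show ?thesis using 1 3 transition[of p1 p2 p3] by (intro conjI)
qed

end
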